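(* Let $\kappa$ be a cardinal and let $B$ be the set of elements of order exactly $2$ in the group $(\mathbb{R}/\mathbb{Z})^{\oplus\kappa}$. Then $B$, with the partial operation induced from the group, is strongly IP-regular.
   Context: $(\mathbb{R}/\mathbb{Z})^{\oplus\kappa}$ is the direct sum of $\kappa$ copies of the circle group $\mathbb{R}/\mathbb{Z}$, written additively. A subset $X$ carries the induced partial operation: $x+y$ is defined in $X$ iff $x,y,x+y\in X$. For a sequence $\vec{x}=(x_n)_{n\in\omega}$ in $X$ all of whose finite sums $\sum_{i\in a}x_i$ ($a$ finite nonempty subset of $\omega$) lie in $X$, $\mathrm{FS}(\vec{x})$ is the set of these sums and $\mathrm{FS}_1(\vec{x})=\mathrm{FS}((x_{n+1})_n)$; an IP-set of $X$ is a subset containing such an $\mathrm{FS}(\vec{x})$. $X$ is strongly IP-regular if for every such sequence $\vec{x}$, $x_0+\mathrm{FS}_1(\vec{x})$ is not an IP-set. *)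

theory Defs
  imports Complex_Main
begin

text \<open>The circle group R/Z is represented by the interval [0,1) with addition
  modulo 1 (i.e. frac of the real sum). The direct sum of kappa copies of R/Z,
  kappa being the cardinality of the index type 'k, is represented by the set of
  finitely supported functions 'k => [0,1), with coordinatewise addition mod 1.\<close>

definition circ_dsum :: "('k \<Rightarrow> real) set" where
  "circ_dsum = {f. (\<forall>i. 0 \<le> f i \<and> f i < 1) \<and> finite {i. f i \<noteq> 0}}"

definition cadd :: "('k \<Rightarrow> real) \<Rightarrow> ('k \<Rightarrow> real) \<Rightarrow> ('k \<Rightarrow> real)" where
  "cadd f g = (\<lambda>i. frac (f i + g i))"

definition czero :: "'k \<Rightarrow> real" where
  "czero = (\<lambda>i. 0)"

definition csum :: "(nat \<Rightarrow> ('k \<Rightarrow> real)) \<Rightarrow> nat set \<Rightarrow> ('k \<Rightarrow> real)" where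
  "csum x a = (\<lambda>j. frac (\<Sum>i\<in>a. x i j))"

definition order2 :: "('k \<Rightarrow> real) set" where
  "order2 = {f \<in> circ_dsum. f \<noteq> czero \<and> cadd f f = czero}"

definition FS_seq :: "('k \<Rightarrow> real) set \<Rightarrow> (nat \<Rightarrow> ('k \<Rightarrow> real)) \<Rightarrow> bool" where
  "FS_seq X x \<longleftrightarrow> (\<forall>n. x n \<in> X) \<and> (\<forall>a. finite a \<and> a \<noteq> {} \<longrightarrow> csum x a \<in> X)"

definition FS :: "(nat \<Rightarrow> ('k \<Rightarrow> real)) \<Rightarrow> ('k \<Rightarrow> real) set" where
  "FS x = {csum x a | a. finite a \<and> a \<noteq> {}}"

definition FS1 :: "(nat \<Rightarrow> ('k \<Rightarrow> real)) \<Rightarrow> ('k \<Rightarrow> real) set" where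
  "FS1 x = FS (\<lambda>n. x (Suc n))"

definition IP_set :: "('k \<Rightarrow> real) set \<Rightarrow> ('k \<Rightarrow> real) set \<Rightarrow> bool" where
  "IP_set X A \<longleftrightarrow> A \<subseteq> X \<and> (\<exists>y. FS_seq X y \<and> FS y \<subseteq> A)"

definition strongly_IP_regular :: "('k \<Rightarrow> real) set \<Rightarrow> bool" where
  "strongly_IP_regular X \<longleftrightarrow>
     (\<forall>x. FS_seq X x \<longrightarrow> \<not> IP_set X (cadd (x 0) ` FS1 x))"

end

theory Submission
  imports Defs
begin

lemma half_order2:
  assumes "f \<in> order2" shows "f j = 0 \<or> f j = 1/2"
proof -
  from assms have r: "0 \<le> f j" "f j < 1" and c: "cadd f f = czero"
    by (auto simp: order2_def circ_dsum_def)
  from c have "frac (f j + f j) = 0" unfolding cadd_def czero_def by meson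
  then have "f j + f j \<in> \<int>" by (simp add: frac_eq_0_iff)
  then obtain k where k: "f j + f j = of_int k" by (auto elim: Ints_cases)
  with r have "0 \<le> k" "k < 2" by linarith+
  then have "k = 0 \<or> k = 1" by linarith
  with k show ?thesis by auto
qed

lemma frac_half: "frac (1/2::real) = 1/2"
  by (simp add: frac_eq)

lemma cadd_par:
  assumes "f j = 0 \<or> f j = 1/2" "g j = 0 \<or> g j = 1/2"
  shows "(cadd f g j \<noteq> 0) \<longleftrightarrow> ((f j \<noteq> 0) \<noteq> (g j \<noteq> 0))"
proof -
  have h1: "frac (1::real) = 0" by simp
  have h0: "frac (0::real) = 0" by simp
  from assms show ?thesis unfolding cadd_def
  proof (elim disjE)
    assume "f j = 1/2" "g j = 1/2"
    then have "f j + g j = 1" by simp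
    then show "(frac (f j + g j) \<noteq> 0) = ((f j \<noteq> 0) \<noteq> (g j \<noteq> 0))" using \<open>f j = 1/2\<close> \<open>g j = 1/2\<close> h1 by (simp only:) simp
  qed (simp_all add: frac_half)
qed

lemma frac_nat_half: "(frac (real n / 2) = 0) \<longleftrightarrow> even n"
proof
  assume "frac (real n / 2) = 0"
  then have "real n / 2 \<in> \<int>" by (simp add: frac_eq_0_iff)
  then obtain k where k: "real n / 2 = of_int k" by (auto elim: Ints_cases)
  then have "int n = 2 * k" by linarith
  then show "even n" by presburger
next
  assume "even n"
  then obtain m where "n = 2 * m" by auto
  then have "real n / 2 = of_nat m" by simp
  then show "frac (real n / 2) = 0" by (simp add: frac_eq_0_iff)
qed

lemma csum_par:
  assumes "finite a" "\<forall>i\<in>a. x i j = 0 \<or> x i j = 1/2"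
  shows "(csum x a j \<noteq> 0) \<longleftrightarrow> odd (card {i\<in>a. x i j \<noteq> 0})"
proof -
  have "(\<Sum>i\<in>a. x i j) = (\<Sum>i\<in>{i\<in>a. x i j \<noteq> 0}. x i j)"
    using assms(1) by (rule sum.mono_neutral_right) auto
  also have "\<dots> = (\<Sum>i\<in>{i\<in>a. x i j \<noteq> 0}. 1/2)"
    using assms(2) by (intro sum.cong) auto
  also have "\<dots> = real (card {i\<in>a. x i j \<noteq> 0}) / 2" by simp
  finally have "(\<Sum>i\<in>a. x i j) = real (card {i\<in>a. x i j \<noteq> 0}) / 2" .
  then show ?thesis unfolding csum_def using frac_nat_half by metis
qed

lemma card_symdiff_par:
  assumes "finite A" "finite B"
  shows "odd (card ((A - B) \<union> (B - A))) \<longleftrightarrow> (odd (card A) \<noteq> odd (card B))"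
proof -
  have 1: "card A = card (A - B) + card (A \<inter> B)"
  proof -
    have "A = (A - B) \<union> (A \<inter> B)" by blast
    then have "card A = card ((A - B) \<union> (A \<inter> B))" by simp
    also have "\<dots> = card (A - B) + card (A \<inter> B)" using assms by (intro card_Un_disjoint) auto
    finally show ?thesis .
  qed
  have 2: "card B = card (B - A) + card (A \<inter> B)"
  proof -
    have "B = (B - A) \<union> (A \<inter> B)" by blast
    then have "card B = card ((B - A) \<union> (A \<inter> B))" by simp
    also have "\<dots> = card (B - A) + card (A \<inter> B)" using assms by (intro card_Un_disjoint) auto
    finally show ?thesis .
  qed
  have 3: "card ((A - B) \<union> (B - A)) = card (A - B) + card (B - A)"
    using assms by (intro card_Un_disjoint) auto
  show ?thesis using 1 2 3 by presburger
qed

lemma filt_symdiff: "{i \<in> (A - B) \<union> (B - A). P i} = ({i\<in>A. P i} - {i\<in>B. P i}) \<union> ({i\<in>B. P i} - {i\<in>A. P i})"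
  by auto

lemma csum_shift: "csum (\<lambda>n. x (Suc n)) b = csum x (Suc ` b)"
  unfolding csum_def by (simp add: sum.reindex)

theorem mainTheorem8:
  shows "strongly_IP_regular (order2 :: ('k \<Rightarrow> real) set)"
  unfolding strongly_IP_regular_def
proof (intro allI impI notI)
  fix x :: "nat \<Rightarrow> 'k \<Rightarrow> real"
  assume fx: "FS_seq order2 x" and ip: "IP_set order2 (cadd (x 0) ` FS1 x)"
  from ip obtain y where fy: "FS_seq order2 y" and sub: "FS y \<subseteq> cadd (x 0) ` FS1 x"
    unfolding IP_set_def by blast
  have memb: "\<exists>c. finite c \<and> c \<noteq> {} \<and> 0 \<notin> c \<and> csum y a = cadd (x 0) (csum x c)"
    if "finite a" "a \<noteq> {}" for a
  proof -
    have "csum y a \<in> FS y" using that unfolding FS_def by blast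
    with sub obtain b where b: "finite b" "b \<noteq> {}" "csum y a = cadd (x 0) (csum (\<lambda>n. x (Suc n)) b)"
      unfolding FS1_def FS_def by blast
    show ?thesis using b by (intro exI[of _ "Suc ` b"]) (auto simp: csum_shift)
  qed
  obtain c0 where c0: "finite c0" "0 \<notin> c0" "csum y {0} = cadd (x 0) (csum x c0)"
    using memb[of "{0}"] by auto
  obtain c1 where c1: "finite c1" "0 \<notin> c1" "csum y {1} = cadd (x 0) (csum x c1)"
    using memb[of "{1}"] by auto
  obtain c2 where c2: "finite c2" "0 \<notin> c2" "csum y {0,1} = cadd (x 0) (csum x c2)"
    using memb[of "{0,1}"] by auto
  have xh: "x i j = 0 \<or> x i j = 1/2" for i j
    using fx unfolding FS_seq_def by (intro half_order2) simp
  have yh: "y i j = 0 \<or> y i j = 1/2" for i j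
    using fy unfolding FS_seq_def by (intro half_order2) simp
  have csx: "csum x c \<in> order2" if "finite c" "c \<noteq> {}" for c
    using fx that unfolding FS_seq_def by simp
  define par where "par c j = odd (card {i\<in>c. x i j \<noteq> 0})" for c j
  have csh: "csum x c j = 0 \<or> csum x c j = 1/2" if "finite c" for c j
  proof (cases "c = {}")
    case True then show ?thesis by (simp add: csum_def)
  next
    case False then show ?thesis using csx[OF that] by (intro half_order2)
  qed
  have cpar: "(csum x c j \<noteq> 0) = par c j" if "finite c" for c j
    unfolding par_def using that xh by (intro csum_par) simp_all
  have img: "(cadd (x 0) (csum x c) j \<noteq> 0) = ((x 0 j \<noteq> 0) \<noteq> par c j)" if "finite c" for c j
    using cadd_par[of "x 0" j "csum x c", OF xh[of 0 j] csh[OF that, of j]] cpar[OF that] by simp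
  have yfr: "frac (y i j) = y i j" for i j
    using fy unfolding FS_seq_def order2_def circ_dsum_def by (auto simp: frac_eq)
  have key: "((x 0 j \<noteq> 0) \<noteq> par c2 j) = (((x 0 j \<noteq> 0) \<noteq> par c0 j) \<noteq> ((x 0 j \<noteq> 0) \<noteq> par c1 j))" for j
  proof -
    have a: "csum y {0} j = y 0 j" "csum y {1} j = y 1 j" by (simp_all add: csum_def yfr)
    have b: "csum y {0,1} j = cadd (y 0) (y 1) j" by (simp add: csum_def cadd_def)
    have "(csum y {0,1} j \<noteq> 0) = ((csum y {0} j \<noteq> 0) \<noteq> (csum y {1} j \<noteq> 0))"
      using b a cadd_par[of "y 0" j "y 1", OF yh[of 0 j] yh[of 1 j]] by simp
    moreover have "(csum y {0} j \<noteq> 0) = ((x 0 j \<noteq> 0) \<noteq> par c0 j)" using c0 img by simp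
    moreover have "(csum y {1} j \<noteq> 0) = ((x 0 j \<noteq> 0) \<noteq> par c1 j)" using c1 img by simp
    moreover have "(csum y {0,1} j \<noteq> 0) = ((x 0 j \<noteq> 0) \<noteq> par c2 j)" using c2 img by simp
    ultimately show ?thesis by argo
  qed
  define E where "E = (c0 - c1) \<union> (c1 - c0)"
  define D where "D = (E - c2) \<union> (c2 - E)"
  have fE: "finite E" using c0 c1 by (simp add: E_def)
  have fD: "finite D" using fE c2 by (simp add: D_def)
  have n0D: "0 \<notin> D" using c0 c1 c2 by (auto simp: D_def E_def)
  have parE: "par E j = (par c0 j \<noteq> par c1 j)" for j
    unfolding par_def E_def filt_symdiff using c0 c1 by (intro card_symdiff_par) auto
  have parD: "par D j = (par E j \<noteq> par c2 j)" for j
    unfolding par_def D_def filt_symdiff using fE c2 by (intro card_symdiff_par) auto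
  have parI: "par (insert 0 D) j = ((x 0 j \<noteq> 0) \<noteq> par D j)" for j
  proof -
    have "{i \<in> insert 0 D. x i j \<noteq> 0} = (if x 0 j \<noteq> 0 then insert 0 {i\<in>D. x i j \<noteq> 0} else {i\<in>D. x i j \<noteq> 0})"
      by auto
    then show ?thesis unfolding par_def using fD n0D by auto
  qed
  have "csum x (insert 0 D) = czero"
  proof
    fix j
    have "\<not> par (insert 0 D) j" using parI[of j] parD[of j] parE[of j] key[of j] by argo
    then show "csum x (insert 0 D) j = czero j"
      using cpar[of "insert 0 D" j] fD by (simp add: czero_def)
  qed
  moreover have "csum x (insert 0 D) \<in> order2" using csx fD by simp
  ultimately show False by (simp add: order2_def)
qed

end
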